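(* Let $G=K_{r_1,\dots,r_k}$ with $r_i\ge 7$ for every $i\in[k]$, and suppose $G$ does not have a good bisection. Then for every edge $e\in E(G)$, the graph $G-e$ does not have a good bisection.
   Context: A bisection of a graph $G$ is a bipartite spanning subgraph $H$ of $G$ with a bipartition into two partition sets (every edge of $H$ joining the two sets) whose sizes differ by at most one. It is good if $2d_H(v)\ge d_G(v)-1$ for every $v\in V(G)$. *)

theory Defs
  imports Main
begin

text \<open>Finite simple graphs are given by a vertex set V and an edge set E of
  2-element subsets of V.\<close>

definition degree :: "'a set set \<Rightarrow> 'a \<Rightarrow> nat" where
  "degree E v = card {e \<in> E. v \<in> e}"

definition is_bisection :: "'a set \<Rightarrow> 'a set set \<Rightarrow> 'a set set \<Rightarrow> 'a set \<Rightarrow> 'a set \<Rightarrow> bool" where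
  "is_bisection V E H A B \<longleftrightarrow>
     H \<subseteq> E \<and> A \<union> B = V \<and> A \<inter> B = {} \<and>
     (\<forall>e\<in>H. \<exists>a\<in>A. \<exists>b\<in>B. e = {a, b}) \<and>
     \<bar>int (card A) - int (card B)\<bar> \<le> 1"

definition has_good_bisection :: "'a set \<Rightarrow> 'a set set \<Rightarrow> bool" where
  "has_good_bisection V E \<longleftrightarrow>
     (\<exists>H A B. is_bisection V E H A B \<and>
        (\<forall>v\<in>V. 2 * int (degree H v) \<ge> int (degree E v) - 1))"

text \<open>Complete multipartite graph K_{r_1,...,r_k}, parts indexed by i < length r,
  part i being {(i,j). j < r!i}.\<close>

definition mp_vertices :: "nat list \<Rightarrow> (nat \<times> nat) set" where
  "mp_vertices r = {(i, j). i < length r \<and> j < r ! i}"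

definition mp_edges :: "nat list \<Rightarrow> (nat \<times> nat) set set" where
  "mp_edges r = {{u, v} | u v. u \<in> mp_vertices r \<and> v \<in> mp_vertices r \<and> fst u \<noteq> fst v}"

end

theory Submission
  imports Defs
begin

lemma finV: "finite (mp_vertices r)"
proof -
  have "mp_vertices r = (SIGMA i:{..<length r}. {..<r!i})" by (auto simp: mp_vertices_def)
  thus ?thesis by simp
qed

lemma finE: "finite (mp_edges r)"
proof -
  have "mp_edges r \<subseteq> Pow (mp_vertices r)" by (auto simp: mp_edges_def)
  thus ?thesis using finV by (meson finite_Pow_iff finite_subset)
qed

lemma edge_fst: "{a,b} \<in> mp_edges r \<Longrightarrow> fst a \<noteq> fst b"
  by (auto simp: mp_edges_def doubleton_eq_iff)

lemma edge_V: "{a,b} \<in> mp_edges r \<Longrightarrow> a \<in> mp_vertices r \<and> b \<in> mp_vertices r"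
  by (auto simp: mp_edges_def doubleton_eq_iff)

lemma degE: assumes "v \<in> mp_vertices r"
  shows "degree (mp_edges r) v = card {u \<in> mp_vertices r. fst u \<noteq> fst v}"
proof -
  have "{f \<in> mp_edges r. v \<in> f} = (\<lambda>u. {v,u}) ` {u \<in> mp_vertices r. fst u \<noteq> fst v}"
    using assms apply (auto simp: mp_edges_def insert_commute)
    by (metis prod.collapse)
  moreover have "inj_on (\<lambda>u. {v,u}) {u \<in> mp_vertices r. fst u \<noteq> fst v}"
    by (auto simp: inj_on_def doubleton_eq_iff)
  ultimately show ?thesis unfolding degree_def by (simp add: card_image)
qed

lemma degX: assumes "v \<in> S" "S \<inter> T = {}"
  shows "degree {{a,b}|a b. a\<in>S \<and> b\<in>T \<and> fst a \<noteq> fst b} v = card {u\<in>T. fst u \<noteq> fst v}"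
proof -
  have "{f \<in> {{a,b}|a b. a\<in>S \<and> b\<in>T \<and> fst a \<noteq> fst b}. v \<in> f} = (\<lambda>u. {v,u}) ` {u\<in>T. fst u \<noteq> fst v}"
    using assms apply auto by (metis prod.collapse)
  moreover have "inj_on (\<lambda>u. {v,u}) {u\<in>T. fst u \<noteq> fst v}"
    by (auto simp: inj_on_def doubleton_eq_iff)
  ultimately show ?thesis unfolding degree_def by (simp add: card_image)
qed

lemma deg_mono: "finite H' \<Longrightarrow> H \<subseteq> H' \<Longrightarrow> degree H v \<le> degree H' v"
  unfolding degree_def by (rule card_mono) auto

lemma deg_diff: assumes "finite E" "e \<in> E"
  shows "degree (E - {e}) v = degree E v - (if v \<in> e then 1 else 0)"
proof -
  have "{f \<in> E - {e}. v \<in> f} = {f \<in> E. v \<in> f} - {e}" by auto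
  thus ?thesis unfolding degree_def using assms by (auto simp: card_Diff_singleton)
qed

lemma deg_pos: assumes "finite E" "e \<in> E" "v \<in> e" shows "degree E v \<ge> 1"
proof -
  have "{f \<in> E. v \<in> f} \<noteq> {}" using assms by auto
  moreover have "finite {f \<in> E. v \<in> f}" using assms by auto
  ultimately show ?thesis unfolding degree_def by (simp add: Suc_le_eq card_gt_0_iff)
qed


lemma side_case:
  assumes V: "S \<union> T = mp_vertices r" "S \<inter> T = {}" "\<bar>int (card S) - int (card T)\<bar> \<le> 1"
    and r7: "\<forall>i<length r. r!i \<ge> 7"
    and HX: "H \<subseteq> {{a,b}|a b. a\<in>S \<and> b\<in>T \<and> fst a \<noteq> fst b}"
    and good: "\<forall>w\<in>mp_vertices r. 2 * int (degree H w) \<ge> int (degree (mp_edges r - {e}) w) - 1"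
    and e: "e = {v,y}" "v\<in>S" "y\<in>S" "fst v \<noteq> fst y" "e \<in> mp_edges r"
  shows "2 * int (degree {{a,b}|a b. a\<in>S \<and> b\<in>T \<and> fst a \<noteq> fst b} v) \<ge> int (degree (mp_edges r) v) - 1"
proof -
  let ?V = "mp_vertices r"
  let ?E = "mp_edges r"
  let ?X = "{{a,b}|a b. a\<in>S \<and> b\<in>T \<and> fst a \<noteq> fst b}"
  have XE: "?X \<subseteq> ?E" using V(1) unfolding mp_edges_def by blast
  have finX: "finite ?X" using finE XE finite_subset by blast
  have vV: "v \<in> ?V" using V e by auto
  have finS: "finite S" "finite T" using finV V(1) finite_subset by (metis sup_ge1, metis sup_ge2)
  have degEe: "degree (?E - {e}) u = degree ?E u - (if u \<in> e then 1 else 0)" for u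
    using deg_diff[OF finE e(5)] .
  have ex: "\<exists>w\<in>S. w \<noteq> v \<and> fst w = fst v"
  proof (rule ccontr)
    assume no: "\<not> ?thesis"
    define P where "P = {u\<in>?V. fst u = fst v}"
    have "fst v < length r" using vV by (auto simp: mp_vertices_def)
    hence P_eq: "P = Pair (fst v) ` {..<r!fst v}" using vV
      by (auto simp: P_def mp_vertices_def)
    have cP: "card P \<ge> 7" using r7 \<open>fst v < length r\<close> unfolding P_eq
      by (simp add: card_image inj_on_def)
    have vP: "v \<in> P" using vV by (simp add: P_def)
    have finP: "finite P" unfolding P_eq by simp
    have T_split: "T = {u\<in>T. fst u \<noteq> fst v} \<union> (P - {v})"
      using no V e(2) by (auto simp: P_def)
    have "card T = card {u\<in>T. fst u \<noteq> fst v} + card (P - {v})"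
      apply (subst T_split) apply (rule card_Un_disjoint) using finS finP by (auto simp: P_def)
    hence cT: "card T = card {u\<in>T. fst u \<noteq> fst v} + card P - 1"
      using vP finP cP by (simp add: card_Diff_singleton)
    have V_split: "?V = {u\<in>?V. fst u \<noteq> fst v} \<union> P" by (auto simp: P_def)
    have "card ?V = card {u\<in>?V. fst u \<noteq> fst v} + card P"
      apply (subst V_split) apply (rule card_Un_disjoint) using finV finP by (auto simp: P_def)
    moreover have "card ?V = card S + card T"
      using V card_Un_disjoint finS by metis
    ultimately have cV: "card S + card T = degree ?E v + card P" using degE[OF vV] by simp
    have d1: "degree H v \<le> card {u\<in>T. fst u \<noteq> fst v}"
      using deg_mono[OF finX HX, of v] degX[OF e(2) V(2)] by simp
    have pos: "degree ?E v \<ge> 1" using deg_pos[OF finE e(5)] e(1) by simp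
    have "2 * int (degree H v) \<ge> int (degree ?E v - 1) - 1"
    proof -
      have "2 * int (degree H v) \<ge> int (degree (?E - {e}) v) - 1" using good vV by blast
      thus ?thesis using degEe[of v] e(1) by simp
    qed
    thus False using d1 pos cT cV cP V(3) by linarith
  qed
  then obtain w where w: "w \<in> S" "w \<noteq> v" "fst w = fst v" by blast
  have wV: "w \<in> ?V" using w V by auto
  have we: "w \<notin> e" using w e by auto
  have "2 * int (degree H w) \<ge> int (degree ?E w) - 1"
  proof -
    have "2 * int (degree H w) \<ge> int (degree (?E - {e}) w) - 1" using good wV by blast
    thus ?thesis using degEe[of w] we by simp
  qed
  moreover have "degree H w \<le> degree ?X w" using deg_mono[OF finX HX] .
  moreover have "degree ?X w = degree ?X v"
    using degX[OF w(1) V(2)] degX[OF e(2) V(2)] w(3) by simp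
  moreover have "degree ?E w = degree ?E v"
    using degE[OF wV] degE[OF vV] w(3) by simp
  ultimately show ?thesis by linarith
qed

theorem proposition3p4:
  fixes r :: "nat list" and e :: "(nat \<times> nat) set"
  assumes "\<forall>i < length r. r ! i \<ge> 7"
    and "\<not> has_good_bisection (mp_vertices r) (mp_edges r)"
    and "e \<in> mp_edges r"
  shows "\<not> has_good_bisection (mp_vertices r) (mp_edges r - {e})"
proof
  let ?V = "mp_vertices r"
  let ?E = "mp_edges r"
  assume "has_good_bisection ?V (?E - {e})"
  then obtain H A B where bis: "is_bisection ?V (?E - {e}) H A B"
    and good: "\<forall>v\<in>?V. 2 * int (degree H v) \<ge> int (degree (?E - {e}) v) - 1"
    unfolding has_good_bisection_def by blast
  have HE: "H \<subseteq> ?E - {e}" and AB: "A \<union> B = ?V" "A \<inter> B = {}"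
    and cAB: "\<bar>int (card A) - int (card B)\<bar> \<le> 1"
    and Hcr: "\<forall>f\<in>H. \<exists>a\<in>A. \<exists>b\<in>B. f = {a, b}"
    using bis unfolding is_bisection_def by auto
  define X where "X = {{a,b}|a b. a\<in>A \<and> b\<in>B \<and> fst a \<noteq> fst b}"
  have Xsym: "X = {{a,b}|a b. a\<in>B \<and> b\<in>A \<and> fst a \<noteq> fst b}"
    unfolding X_def by (auto simp: insert_commute) 
  have XE: "X \<subseteq> ?E" using AB(1) unfolding mp_edges_def X_def by blast
  have finX: "finite X" using finE XE finite_subset by blast
  have HX: "H \<subseteq> X"
  proof
    fix f assume "f \<in> H"
    then obtain a b where "a\<in>A" "b\<in>B" "f = {a,b}" using Hcr by blast
    moreover have "f \<in> ?E" using HE \<open>f \<in> H\<close> by auto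
    ultimately show "f \<in> X" using edge_fst unfolding X_def by blast
  qed
  have HXB: "H \<subseteq> {{a,b}|a b. a\<in>B \<and> b\<in>A \<and> fst a \<noteq> fst b}" using HX Xsym by simp
  have degEe: "degree (?E - {e}) u = degree ?E u - (if u \<in> e then 1 else 0)" for u
    using deg_diff[OF finE assms(3)] .
  have "has_good_bisection ?V ?E"
    unfolding has_good_bisection_def
  proof (intro exI conjI ballI)
    show "is_bisection ?V ?E X A B"
      using XE AB cAB unfolding is_bisection_def X_def by blast
    fix v assume vV: "v \<in> ?V"
    show "2 * int (degree X v) \<ge> int (degree ?E v) - 1"
    proof (cases "v \<in> e")
      case False
      have "2 * int (degree H v) \<ge> int (degree (?E - {e}) v) - 1" using good vV by blast
      thus ?thesis using degEe[of v] deg_mono[OF finX HX, of v] False by simp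
    next
      case True
      then obtain y where ey: "e = {v,y}" using assms(3) by (auto simp: mp_edges_def)
      have fy: "fst v \<noteq> fst y" using edge_fst assms(3) ey by blast
      have yV: "y \<in> ?V" using edge_V assms(3) ey by blast
      show ?thesis
      proof (cases "e \<in> X")
        case True
        have "H \<subseteq> X - {e}" using HX HE by auto
        hence "degree H v \<le> degree (X - {e}) v"
          using deg_mono[of "X - {e}" H v] finX by auto
        moreover have "degree (X - {e}) v = degree X v - 1"
          using deg_diff[OF finX True] \<open>v \<in> e\<close> by simp
        moreover have "degree X v \<ge> 1" using deg_pos[OF finX True \<open>v \<in> e\<close>] .
        moreover have "degree ?E v \<ge> 1" using deg_pos[OF finE assms(3) \<open>v \<in> e\<close>] .
        moreover have "2 * int (degree H v) \<ge> int (degree (?E - {e}) v) - 1" using good vV by blast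
        ultimately show ?thesis using degEe[of v] \<open>v \<in> e\<close> by simp
      next
        case False
        show ?thesis
        proof (cases "v \<in> A")
          case True
          have "y \<in> A"
          proof (rule ccontr)
            assume "y \<notin> A" hence "y \<in> B" using yV AB by auto
            hence "e \<in> X" using True ey fy unfolding X_def by blast
            thus False using \<open>e \<notin> X\<close> by simp
          qed
          show ?thesis unfolding X_def
            by (rule side_case[OF AB cAB assms(1) HX[unfolded X_def] good ey True \<open>y \<in> A\<close> fy assms(3)])
        next
          case False
          hence vB: "v \<in> B" using vV AB by auto
          have "y \<in> B"
          proof (rule ccontr)
            assume "y \<notin> B" hence "y \<in> A" using yV AB by auto
            hence "e \<in> X" using vB ey fy unfolding Xsym by blast
            thus False using \<open>e \<notin> X\<close> by simp
          qed
          have AB': "B \<union> A = ?V" "B \<inter> A = {}" using AB by auto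
          have cBA: "\<bar>int (card B) - int (card A)\<bar> \<le> 1" using cAB by linarith
          show ?thesis unfolding Xsym
            by (rule side_case[OF AB' cBA assms(1) HXB good ey vB \<open>y \<in> B\<close> fy assms(3)])
        qed
      qed
    qed
  qed
  thus False using assms(2) by simp
qed

end
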